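(* Let $m,n\in\mathbb{N}$. Then: (1) the complete bipartite graph $K_{1,n}$ is an $\mathcal{N}$ position for Grim; (2) if $m,n>1$, then $K_{m,n}$ is an $\mathcal{N}$ position for Grim if and only if $m+n$ is odd.
   Context: Grim is a two-player game on a finite simple undirected graph. Any isolated vertices of the starting graph are deleted before play begins. Players alternate moves; a move consists of selecting a vertex of the current graph and deleting it together with all its incident edges, after which every vertex that has become isolated is also deleted. The player who makes the last legal move wins (a player facing the empty graph has no move and loses). A graph is an $\mathcal{N}$ position if the player about to move has a winning strategy, and a $\mathcal{P}$ position otherwise. *)

theory Defs
  imports Main
begin

type_synonym 'a graph = "'a set \<times> 'a set set"

definition simple_graph :: "'a graph \<Rightarrow> bool" where
  "simple_graph G \<longleftrightarrow> finite (fst G) \<and>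
     (\<forall>e\<in>snd G. \<exists>u v. u \<in> fst G \<and> v \<in> fst G \<and> u \<noteq> v \<and> e = {u, v})"

definition del_isolated :: "'a graph \<Rightarrow> 'a graph" where
  "del_isolated G = ({v \<in> fst G. \<exists>e\<in>snd G. v \<in> e}, snd G)"

definition grim_move :: "'a graph \<Rightarrow> 'a \<Rightarrow> 'a graph" where
  "grim_move G v = del_isolated (fst G - {v}, {e \<in> snd G. v \<notin> e})"

text \<open>N positions (next player wins) and P positions (previous player wins),
  defined by the usual mutual recursion; a position with no vertex is P.\<close>
inductive grim_N :: "'a graph \<Rightarrow> bool" and grim_P :: "'a graph \<Rightarrow> bool" where
  N_intro: "v \<in> fst G \<Longrightarrow> grim_P (grim_move G v) \<Longrightarrow> grim_N G"
| P_intro: "(\<And>v. v \<in> fst G \<Longrightarrow> grim_N (grim_move G v)) \<Longrightarrow> grim_P G"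

definition grim_N_position :: "'a graph \<Rightarrow> bool" where
  "grim_N_position G \<longleftrightarrow> grim_N (del_isolated G)"

definition K_bip :: "nat \<Rightarrow> nat \<Rightarrow> (nat + nat) graph" where
  "K_bip m n = (Inl ` {..<m} \<union> Inr ` {..<n},
                {{Inl i, Inr j} | i j. i < m \<and> j < n})"

end

theory Submission
  imports Defs
begin

definition KG :: "nat set \<Rightarrow> nat set \<Rightarrow> (nat + nat) graph" where
  "KG A B = (Inl ` A \<union> Inr ` B, {{Inl i, Inr j} | i j. i \<in> A \<and> j \<in> B})"

lemma K_bip_KG: "K_bip m n = KG {..<m} {..<n}"
  by (simp add: K_bip_def KG_def)

lemma del_iso_KG: "A \<noteq> {} \<Longrightarrow> B \<noteq> {} \<Longrightarrow> del_isolated (KG A B) = KG A B"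
  unfolding del_isolated_def KG_def by auto

lemma del_iso_KG_emptyL: "del_isolated (KG {} B) = ({}, {})"
  unfolding del_isolated_def KG_def by auto

lemma del_iso_KG_emptyR: "del_isolated (KG A {}) = ({}, {})"
  unfolding del_isolated_def KG_def by auto

lemma move_L: "grim_move (KG A B) (Inl a) = del_isolated (KG (A - {a}) B)"
proof -
  have "(fst (KG A B) - {Inl a}, {e \<in> snd (KG A B). Inl a \<notin> e}) = KG (A - {a}) B"
    unfolding KG_def by auto
  then show ?thesis unfolding grim_move_def by simp
qed

lemma move_R: "grim_move (KG A B) (Inr b) = del_isolated (KG A (B - {b}))"
proof -
  have "(fst (KG A B) - {Inr b}, {e \<in> snd (KG A B). Inr b \<notin> e}) = KG A (B - {b})"
    unfolding KG_def by auto
  then show ?thesis unfolding grim_move_def by simp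
qed

lemma P_empty: "grim_P ({}, {})"
  by (rule P_intro) simp

lemma disj:
  fixes G H :: "'a graph"
  shows "grim_N G \<Longrightarrow> \<not> grim_P G" and "grim_P H \<Longrightarrow> \<not> grim_N H"
proof (induct G and H rule: grim_N_grim_P.inducts)
  case (N_intro v G)
  then show ?case by (blast elim: grim_P.cases)
next
  case (P_intro G)
  then show ?case by (blast elim: grim_N.cases)
qed

lemma main:
  "finite A \<Longrightarrow> finite B \<Longrightarrow> A \<noteq> {} \<Longrightarrow> B \<noteq> {} \<Longrightarrow> card A + card B = k \<Longrightarrow>
   (card A = 1 \<or> card B = 1 \<longrightarrow> grim_N (KG A B)) \<and>
   (2 \<le> card A \<and> 2 \<le> card B \<longrightarrow>
      (odd (card A + card B) \<longrightarrow> grim_N (KG A B)) \<and>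
      (even (card A + card B) \<longrightarrow> grim_P (KG A B)))"
proof (induction k arbitrary: A B rule: less_induct)
  case (less k A B)
  note fin = less.prems(1,2) and ne = less.prems(3,4)
  have c1: "grim_N (KG A B)" if "card A = 1 \<or> card B = 1"
    using that
  proof
    assume "card A = 1"
    then obtain a where "A = {a}" by (auto simp: card_Suc_eq)
    hence "grim_move (KG A B) (Inl a) = ({}, {})"
      by (simp add: move_L del_iso_KG_emptyL)
    moreover have "Inl a \<in> fst (KG A B)" using \<open>A = {a}\<close> by (simp add: KG_def)
    ultimately show ?thesis using N_intro P_empty by metis
  next
    assume "card B = 1"
    then obtain b where "B = {b}" by (auto simp: card_Suc_eq)
    hence "grim_move (KG A B) (Inr b) = ({}, {})"
      by (simp add: move_R del_iso_KG_emptyR)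
    moreover have "Inr b \<in> fst (KG A B)" using \<open>B = {b}\<close> by (simp add: KG_def)
    ultimately show ?thesis using N_intro P_empty by metis
  qed
  have IHL: "(card (A - {a}) = 1 \<or> card B = 1 \<longrightarrow> grim_N (KG (A - {a}) B)) \<and>
   (2 \<le> card (A - {a}) \<and> 2 \<le> card B \<longrightarrow>
      (odd (card (A - {a}) + card B) \<longrightarrow> grim_N (KG (A - {a}) B)) \<and>
      (even (card (A - {a}) + card B) \<longrightarrow> grim_P (KG (A - {a}) B)))"
    and mL: "grim_move (KG A B) (Inl a) = KG (A - {a}) B"
    and cL: "card (A - {a}) = card A - 1"
    if "a \<in> A" "2 \<le> card A" for a
  proof -
    have "card (A - {a}) = card A - 1" using that fin by simp
    moreover have "A - {a} \<noteq> {}"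
    proof
      assume "A - {a} = {}"
      hence "card (A - {a}) = 0" by (metis card.empty)
      thus False using that \<open>card (A - {a}) = card A - 1\<close> by simp
    qed
    ultimately show "(card (A - {a}) = 1 \<or> card B = 1 \<longrightarrow> grim_N (KG (A - {a}) B)) \<and>
   (2 \<le> card (A - {a}) \<and> 2 \<le> card B \<longrightarrow>
      (odd (card (A - {a}) + card B) \<longrightarrow> grim_N (KG (A - {a}) B)) \<and>
      (even (card (A - {a}) + card B) \<longrightarrow> grim_P (KG (A - {a}) B)))"
      using less.IH[of "card (A - {a}) + card B" "A - {a}" B] less.prems that by simp
    show "grim_move (KG A B) (Inl a) = KG (A - {a}) B"
      using \<open>A - {a} \<noteq> {}\<close> ne by (simp add: move_L del_iso_KG)
    show "card (A - {a}) = card A - 1" by fact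
  qed
  have IHR: "(card A = 1 \<or> card (B - {b}) = 1 \<longrightarrow> grim_N (KG A (B - {b}))) \<and>
   (2 \<le> card A \<and> 2 \<le> card (B - {b}) \<longrightarrow>
      (odd (card A + card (B - {b})) \<longrightarrow> grim_N (KG A (B - {b}))) \<and>
      (even (card A + card (B - {b})) \<longrightarrow> grim_P (KG A (B - {b}))))"
    and mR: "grim_move (KG A B) (Inr b) = KG A (B - {b})"
    and cR: "card (B - {b}) = card B - 1"
    if "b \<in> B" "2 \<le> card B" for b
  proof -
    have "card (B - {b}) = card B - 1" using that fin by simp
    moreover have "B - {b} \<noteq> {}"
    proof
      assume "B - {b} = {}"
      hence "card (B - {b}) = 0" by (metis card.empty)
      thus False using that \<open>card (B - {b}) = card B - 1\<close> by simp
    qed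
    ultimately show "(card A = 1 \<or> card (B - {b}) = 1 \<longrightarrow> grim_N (KG A (B - {b}))) \<and>
   (2 \<le> card A \<and> 2 \<le> card (B - {b}) \<longrightarrow>
      (odd (card A + card (B - {b})) \<longrightarrow> grim_N (KG A (B - {b}))) \<and>
      (even (card A + card (B - {b})) \<longrightarrow> grim_P (KG A (B - {b}))))"
      using less.IH[of "card A + card (B - {b})" A "B - {b}"] less.prems that by simp
    show "grim_move (KG A B) (Inr b) = KG A (B - {b})"
      using \<open>B - {b} \<noteq> {}\<close> ne by (simp add: move_R del_iso_KG)
    show "card (B - {b}) = card B - 1" by fact
  qed
  have c2: "grim_N (KG A B)" if "2 \<le> card A" "2 \<le> card B" "odd (card A + card B)"
  proof (cases "card A = 2")
    case True
    obtain b where b: "b \<in> B" using ne by auto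
    have "2 \<le> card B - 1" using that True by presburger
    have "grim_P (KG A (B - {b}))"
      using \<open>2 \<le> card B - 1\<close> IHR[OF b that(2)] cR[OF b that(2)] that True by auto
    moreover have "Inr b \<in> fst (KG A B)" using b by (simp add: KG_def)
    ultimately show ?thesis using N_intro mR[OF b that(2)] by metis
  next
    case False
    obtain a where a: "a \<in> A" using ne by auto
    have "grim_P (KG (A - {a}) B)"
      using IHL[OF a that(1)] cL[OF a that(1)] that False by auto
    moreover have "Inl a \<in> fst (KG A B)" using a by (simp add: KG_def)
    ultimately show ?thesis using N_intro mL[OF a that(1)] by metis
  qed
  have c3: "grim_P (KG A B)" if "2 \<le> card A" "2 \<le> card B" "even (card A + card B)"
  proof (rule P_intro)
    fix v assume v: "v \<in> fst (KG A B)"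
    show "grim_N (grim_move (KG A B) v)"
    proof (cases v)
      case (Inl a)
      hence a: "a \<in> A" using v by (auto simp: KG_def)
      show ?thesis
        using IHL[OF a that(1)] cL[OF a that(1)] mL[OF a that(1)] that Inl
        by (cases "card A = 2") auto
    next
      case (Inr b)
      hence b: "b \<in> B" using v by (auto simp: KG_def)
      show ?thesis
        using IHR[OF b that(2)] cR[OF b that(2)] mR[OF b that(2)] that Inr
        by (cases "card B = 2") auto
    qed
  qed
  show ?case using c1 c2 c3 by blast
qed

theorem theorem3p2:
  shows "(\<forall>n::nat. n \<ge> 1 \<longrightarrow> grim_N_position (K_bip 1 n)) \<and>
         (\<forall>m n::nat. 1 < m \<and> 1 < n \<longrightarrow> (grim_N_position (K_bip m n) \<longleftrightarrow> odd (m + n)))"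
proof safe
  fix n :: nat assume "1 \<le> n"
  hence "0 \<in> {..<n}" by simp
  hence "{..<n} \<noteq> {}" by blast
  moreover have "{..<Suc 0} = {0::nat}" by auto
  ultimately show "grim_N_position (K_bip 1 n)"
    using main[of "{..<1}" "{..<n}"]
    unfolding grim_N_position_def K_bip_KG by (simp add: del_iso_KG)
next
  fix m n :: nat assume h: "1 < m" "1 < n"
  hence ne: "{..<m} \<noteq> {}" "{..<n} \<noteq> {}" by auto
  have M: "(odd (m + n) \<longrightarrow> grim_N (KG {..<m} {..<n})) \<and>
      (even (m + n) \<longrightarrow> grim_P (KG {..<m} {..<n}))"
    using main[of "{..<m}" "{..<n}"] ne h by simp
  { assume "grim_N_position (K_bip m n)" "even (m + n)"
    then show False using M disj(1)[of "KG {..<m} {..<n}"]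
      unfolding grim_N_position_def K_bip_KG by (simp add: del_iso_KG ne) }
  { assume "odd (m + n)"
    then show "grim_N_position (K_bip m n)" using M
      unfolding grim_N_position_def K_bip_KG by (simp add: del_iso_KG ne) }
qed

end
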